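(* For every $\epsilon>0$, every $\delta>0$, and all integers $n\ge 2$ and $t$ with $1\le t\le \delta n$, there is an instance of $\mathrm{Knapsack}$ with $n$ objects (namely the uniform instance $c_i=v_i=1$ for all $i$, with a suitable capacity $C\in[1,2)$) such that $$\max\Big\{\sum_{i\in V} v_i\, y_{\{i\}} \;:\; y\in \mathrm{SA}^t(K)\Big\}\;\ge\; \frac{2-\epsilon}{1+\delta}\cdot \mathrm{OPT},$$ where $K$ is the LP relaxation of the instance and $\mathrm{OPT}$ its optimal integral value. That is, the integrality gap of the $t$-th level of the Sherali-Adams hierarchy for $\mathrm{Knapsack}$ is at least $(2-\epsilon)/(1+\delta)$ whenever $t\le\delta n$.
   Context: A $\mathrm{Knapsack}$ instance consists of objects $V=[n]$ with sizes $c_i\ge 0$, values $v_i\ge 0$ and a capacity $C$ with $c_i\le C$ for all $i$; $\mathrm{OPT}$ is the maximum of $\sum_{i\in X}v_i$ over $X\subseteq V$ with $\sum_{i\in X}c_i\le C$. Its LP relaxation is $K=\{x\in[0,1]^n: g(x)\ge 0\}$ with the single constraint $g(x)=C-\sum_{i\in V}c_ix_i$. Notation: $\mathcal P(U)$ is the power set of $U$ and $\mathcal P_t(U)$ the set of subsets of $U$ of size at most $t$. For a collection $\mathcal T$ of subsets of $V$ and a vector $y$ indexed by subsets of $V$, $M_{\mathcal T}(y)$ is the symmetric matrix with rows and columns indexed by $\mathcal T$ and $(I,J)$-entry $y_{I\cup J}$. For an affine function $g(x)=b+\sum_{j\in V}a_jx_j$, $g*y$ is the vector with $(g*y)_I=b\,y_I+\sum_{j\in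 V}a_j\,y_{I\cup\{j\}}$. The $t$-th Sherali-Adams lifted polytope of $K=\{x\in[0,1]^n: g_\ell(x)\ge0,\ \ell=1,\dots,m\}$ (with affine $g_\ell$) is $\mathrm{SA}^t(K)$, the set of $y\in[0,1]^{\mathcal P_t(V)}$ with $y_\emptyset=1$, $M_{\mathcal P(U)}(y)\succeq 0$ for every $U\subseteq V$ with $|U|\le t$, and $M_{\mathcal P(W)}(g_\ell*y)\succeq0$ for every $\ell$ and every $W\subseteq V$ with $|W|\le t-1$. *)

theory Defs
  imports Complex_Main
begin

definition objs :: "nat \<Rightarrow> nat set" where
  "objs n = {1..n}"

definition subsets_upto :: "nat \<Rightarrow> nat set \<Rightarrow> nat set set" where
  "subsets_upto t U = {I. I \<subseteq> U \<and> card I \<le> t}"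

text \<open>M_T(y) is positive semidefinite: the symmetric matrix with (I,J)-entry y(I Un J)
  satisfies x^T M x >= 0 for all real vectors x indexed by T (T finite).\<close>
definition moment_psd :: "nat set set \<Rightarrow> (nat set \<Rightarrow> real) \<Rightarrow> bool" where
  "moment_psd T y \<longleftrightarrow>
     (\<forall>x :: nat set \<Rightarrow> real. (\<Sum>I\<in>T. \<Sum>J\<in>T. x I * y (I \<union> J) * x J) \<ge> 0)"

text \<open>g * y for the affine function g(x) = b + sum_{j in V} a_j x_j.\<close>
definition shift_vec :: "nat set \<Rightarrow> real \<Rightarrow> (nat \<Rightarrow> real) \<Rightarrow> (nat set \<Rightarrow> real) \<Rightarrow> (nat set \<Rightarrow> real)" where
  "shift_vec V b a y = (\<lambda>I. b * y I + (\<Sum>j\<in>V. a j * y (I \<union> {j})))"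

text \<open>t-th Sherali-Adams lift of the knapsack LP relaxation
  K = {x in [0,1]^n : C - sum_i c_i x_i >= 0}. Vectors y are elements of [0,1]^{P_t(V)},
  represented as functions that vanish outside P_t(V).\<close>
definition SA_knapsack :: "nat \<Rightarrow> nat \<Rightarrow> (nat \<Rightarrow> real) \<Rightarrow> real \<Rightarrow> (nat set \<Rightarrow> real) set" where
  "SA_knapsack t n c C =
    {y. (\<forall>I. I \<notin> subsets_upto t (objs n) \<longrightarrow> y I = 0)
      \<and> (\<forall>I\<in>subsets_upto t (objs n). 0 \<le> y I \<and> y I \<le> 1)
      \<and> y {} = 1
      \<and> (\<forall>U. U \<subseteq> objs n \<and> card U \<le> t \<longrightarrow> moment_psd (Pow U) y)
      \<and> (\<forall>W. W \<subseteq> objs n \<and> card W + 1 \<le> t \<longrightarrow>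
             moment_psd (Pow W) (shift_vec (objs n) C (\<lambda>j. - c j) y))}"

definition knap_OPT :: "nat \<Rightarrow> (nat \<Rightarrow> real) \<Rightarrow> (nat \<Rightarrow> real) \<Rightarrow> real \<Rightarrow> real" where
  "knap_OPT n c v C =
     Max ((\<lambda>X. \<Sum>i\<in>X. v i) ` {X. X \<subseteq> objs n \<and> (\<Sum>i\<in>X. c i) \<le> C})"

end

theory Submission
  imports Defs
begin

lemma psd_lemma:
  assumes fin: "finite U" and nn: "\<And>i. i\<in>U \<Longrightarrow> f {i} \<ge> 0"
    and big: "f {} \<ge> (\<Sum>i\<in>U. f {i})"
    and zero: "\<And>K. K \<subseteq> U \<Longrightarrow> K \<noteq> {} \<Longrightarrow> (\<forall>i. K \<noteq> {i}) \<Longrightarrow> f K = 0"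
  shows "moment_psd (Pow U) f"
  unfolding moment_psd_def
proof
  fix x :: "nat set \<Rightarrow> real"
  define e where "e = (\<lambda>I::nat set. if I = {} then (1::real) else 0)"
  define h where "h = (\<lambda>i (I::nat set). if I \<subseteq> {i} then (1::real) else 0)"
  define a where "a = f {} - (\<Sum>i\<in>U. f {i})"
  have keyK: "f K = a * e K + (\<Sum>i\<in>U. f {i} * h i K)" if "K \<subseteq> U" for K
  proof (cases "K = {}")
    case True then show ?thesis by (simp add: a_def e_def h_def)
  next
    case False
    show ?thesis
    proof (cases "\<exists>k. K = {k}")
      case True
      then obtain k where k: "K = {k}" by blast
      with that have "k \<in> U" by auto
      have "(\<Sum>i\<in>U. f {i} * h i K) = (\<Sum>i\<in>U. if i = k then f {i} else 0)"
        by (rule sum.cong) (auto simp: h_def k)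
      also have "\<dots> = f {k}" using \<open>k\<in>U\<close> fin by simp
      finally show ?thesis using k by (simp add: e_def)
    next
      case False
      have "h i K = 0" for i using False \<open>K \<noteq> {}\<close> unfolding h_def
        by (auto simp: subset_singleton_iff)
      then show ?thesis using zero[OF that \<open>K \<noteq> {}\<close>] False \<open>K \<noteq> {}\<close> by (simp add: e_def)
    qed
  qed
  have key: "f (I \<union> J) = a * e I * e J + (\<Sum>i\<in>U. f {i} * h i I * h i J)"
    if "I \<in> Pow U" "J \<in> Pow U" for I J
  proof -
    have "e (I \<union> J) = e I * e J" "\<And>i. h i (I \<union> J) = h i I * h i J"
      by (auto simp: e_def h_def)
    then show ?thesis using keyK[of "I \<union> J"] that by (simp add: mult.assoc)
  qed
  have "(\<Sum>I\<in>Pow U. \<Sum>J\<in>Pow U. x I * f (I \<union> J) * x J)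
      = (\<Sum>I\<in>Pow U. \<Sum>J\<in>Pow U. a * ((x I * e I) * (x J * e J)) + (\<Sum>i\<in>U. f {i} * ((x I * h i I) * (x J * h i J))))"
    by (intro sum.cong refl) (simp add: key algebra_simps sum_distrib_left sum_distrib_right)
  also have "\<dots> = a * (\<Sum>I\<in>Pow U. x I * e I)^2 + (\<Sum>i\<in>U. f {i} * (\<Sum>I\<in>Pow U. x I * h i I)^2)"
  proof -
    have sq: "(\<Sum>I\<in>Pow U. \<Sum>J\<in>Pow U. g I * g J) = (\<Sum>I\<in>Pow U. g I)^2" for g :: "nat set \<Rightarrow> real"
      by (simp add: power2_eq_square sum_product)
    have "(\<Sum>I\<in>Pow U. \<Sum>J\<in>Pow U. a * ((x I * e I) * (x J * e J)) + (\<Sum>i\<in>U. f {i} * ((x I * h i I) * (x J * h i J))))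
       = a * (\<Sum>I\<in>Pow U. \<Sum>J\<in>Pow U. (x I * e I) * (x J * e J)) + (\<Sum>i\<in>U. f {i} * (\<Sum>I\<in>Pow U. \<Sum>J\<in>Pow U. (x I * h i I) * (x J * h i J)))"
      by (simp add: sum.distrib sum_distrib_left sum.swap[of _ U])
    then show ?thesis by (simp only: sq)
  qed
  also have "\<dots> \<ge> 0"
    using big nn by (intro add_nonneg_nonneg mult_nonneg_nonneg sum_nonneg) (auto simp: a_def)
  finally show "(\<Sum>I\<in>Pow U. \<Sum>J\<in>Pow U. x I * f (I \<union> J) * x J) \<ge> 0" .
qed

lemma arithA:
  fixes m N \<delta> e :: real
  assumes "0 < \<delta>" "0 < e" "e \<le> 1" "m \<le> N" "m \<le> \<delta> * N" "0 < N" "0 \<le> m"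
  shows "m * ((2 - e) / (1 + \<delta>) / N) \<le> 1"
proof -
  have "m * (2 - e) \<le> N * (1 + \<delta>)" proof -
    have "0 \<le> e*m" using assms by simp
    moreover have "m*(2-e) = 2*m - e*m" "N*(1+\<delta>) = N + \<delta>*N" by (simp_all add: algebra_simps)
    ultimately show ?thesis using assms by linarith
  qed
  then show ?thesis using assms by (simp add: field_simps)
qed

lemma arithB:
  fixes m N \<delta> e :: real
  assumes "0 < \<delta>" "0 < e" "e \<le> 1" "m \<le> \<delta> * N" "0 < N" "0 \<le> m"
  shows "m * ((2 - e/2) * ((2 - e) / (1 + \<delta>) / N) - (2 - e) / (1 + \<delta>) / N)
         \<le> (2 - e/2) - N * ((2 - e) / (1 + \<delta>) / N)"
proof -
  have k: "(2-e)*(1+\<delta>*(1-e/2)) \<le> (2-e/2)*(1+\<delta>)"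
  proof -
    have "\<delta>*((2-e)*(1-e/2)) \<le> \<delta>*(2-e/2)"
      proof -
      have "e*e \<le> e*1" using assms by (intro mult_left_mono) auto
      then have "(2-e)*(1-e/2) \<le> 2-e/2" using assms by (simp add: algebra_simps)
      then show ?thesis using assms by (intro mult_left_mono) auto
    qed
    then show ?thesis using assms by (simp add: algebra_simps)
  qed
  define s where "s = (2 - e) / (1 + \<delta>)"
  have s0: "0 \<le> s" using assms by (simp add: s_def)
  have ks: "s * (1+\<delta>*(1-e/2)) \<le> 2 - e/2"
    using k assms unfolding s_def by (simp add: field_simps)
  have Np: "N * (s / N) = s" using assms by simp
  have lhs: "m * ((2 - e/2) * (s / N) - s / N) = (m / N) * ((1 - e/2) * s)"
    using assms by (simp add: field_simps)
  have "m / N \<le> \<delta>" using assms by (simp add: field_simps)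
  moreover have "0 \<le> (1 - e/2) * s" using assms s0 by simp
  ultimately have "(m / N) * ((1 - e/2) * s) \<le> \<delta> * ((1 - e/2) * s)"
    by (rule mult_right_mono)
  then show ?thesis unfolding s_def[symmetric] lhs Np using ks by (simp add: algebra_simps)
qed

lemma opt_one:
  assumes "1 \<le> C" "C < 2" "n \<ge> 1"
  shows "knap_OPT n (\<lambda>_. 1) (\<lambda>_. 1) C = 1"
  unfolding knap_OPT_def
proof (rule Max_eqI)
  show "finite ((\<lambda>X. \<Sum>i\<in>X. (1::real)) ` {X. X \<subseteq> objs n \<and> (\<Sum>i\<in>X. (1::real)) \<le> C})"
    by (rule finite_imageI, rule finite_subset[of _ "Pow (objs n)"]) (auto simp: objs_def)
  fix r assume "r \<in> (\<lambda>X. \<Sum>i\<in>X. (1::real)) ` {X. X \<subseteq> objs n \<and> (\<Sum>i\<in>X. (1::real)) \<le> C}"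
  then obtain X :: "nat set" where "r = (\<Sum>i\<in>X. (1::real))" "(\<Sum>i\<in>X. (1::real)) \<le> C" by blast
  then have "r = real (card X)" "real (card X) \<le> C" by auto
  then have "real (card X) < 2" using assms by linarith
  then have "card X \<le> 1" by linarith
  then show "r \<le> 1" using \<open>r = real (card X)\<close> by simp
next
  show "1 \<in> (\<lambda>X. \<Sum>i\<in>X. (1::real)) ` {X. X \<subseteq> objs n \<and> (\<Sum>i\<in>X. (1::real)) \<le> C}"
    using assms by (intro image_eqI[of _ _ "{1}"]) (auto simp: objs_def)
qed

theorem mainTheorem1:
  fixes \<epsilon> \<delta> :: real and n t :: nat
  assumes "\<epsilon> > 0" and "\<delta> > 0" and "n \<ge> 2" and "1 \<le> t" and "real t \<le> \<delta> * real n"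
  shows "\<exists>C::real. 1 \<le> C \<and> C < 2 \<and>
           (let c = (\<lambda>_::nat. 1::real); v = (\<lambda>_::nat. 1::real) in
            \<exists>y \<in> SA_knapsack t n c C.
              (\<Sum>i\<in>objs n. v i * y {i}) \<ge> (2 - \<epsilon>) / (1 + \<delta>) * knap_OPT n c v C)"
proof -
  define e where "e = min \<epsilon> 1"
  have e0: "0 < e" "e \<le> 1" "e \<le> \<epsilon>" using assms by (auto simp: e_def)
  define s where "s = (2 - e) / (1 + \<delta>)"
  define p where "p = s / real n"
  define C where "C = 2 - e/2"
  define y where "y = (\<lambda>I::nat set. if I = {} then 1 else if (\<exists>i\<in>objs n. I = {i}) then p else (0::real))"
  have n0: "real n > 0" using assms by simp
  have s0: "0 < s" using e0 assms by (simp add: s_def)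
  have s2: "s \<le> 2" using e0 assms by (simp add: s_def field_simps)
  have p0: "0 \<le> p" using s0 n0 by (simp add: p_def)
  have p1: "p \<le> 1" using s2 assms by (simp add: p_def field_simps)
  have C1: "1 \<le> C" "C < 2" using e0 by (auto simp: C_def)
  have fin: "finite (objs n)" by (simp add: objs_def)
  have cardn: "card (objs n) = n" by (simp add: objs_def)
  have ysing: "y {i} = p" if "i \<in> objs n" for i using that by (auto simp: y_def)
  have yzero: "y K = 0" if "K \<noteq> {}" "\<forall>i. K \<noteq> {i}" for K using that by (auto simp: y_def)
  have ySA: "y \<in> SA_knapsack t n (\<lambda>_. 1) C"
    unfolding SA_knapsack_def
  proof (intro CollectI conjI allI impI ballI)
    fix I assume "I \<notin> subsets_upto t (objs n)"
    then show "y I = 0" using assms(4) by (auto simp: y_def subsets_upto_def)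
  next
    fix I show "0 \<le> y I" "y I \<le> 1" using p0 p1 by (auto simp: y_def)
  next
    show "y {} = 1" by (simp add: y_def)
  next
    fix U assume U: "U \<subseteq> objs n \<and> card U \<le> t"
    have finU: "finite U" using U fin finite_subset by blast
    have cU: "card U \<le> n" using U card_mono[OF fin] cardn by fastforce
    show "moment_psd (Pow U) y"
    proof (rule psd_lemma[OF finU])
      show "\<And>i. i \<in> U \<Longrightarrow> 0 \<le> y {i}" using p0 U ysing by auto
      have "(\<Sum>i\<in>U. y {i}) = (\<Sum>i\<in>U. p)" using U ysing by (intro sum.cong) auto
      also have "\<dots> = real (card U) * p" by simp
      also have "\<dots> \<le> 1" unfolding p_def s_def
        using arithA[of \<delta> e "real (card U)" "real n"] e0 assms U cU n0 by simp
      finally show "(\<Sum>i\<in>U. y {i}) \<le> y {}" by (simp add: y_def)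
      show "\<And>K. K \<subseteq> U \<Longrightarrow> K \<noteq> {} \<Longrightarrow> \<forall>i. K \<noteq> {i} \<Longrightarrow> y K = 0" using yzero by blast
    qed
  next
    fix W assume W: "W \<subseteq> objs n \<and> card W + 1 \<le> t"
    have finW: "finite W" using W fin finite_subset by blast
    define f where "f = shift_vec (objs n) C (\<lambda>_. - 1) y"
    have f0: "f {} = C - real n * p"
      using ysing cardn by (simp add: f_def shift_vec_def y_def sum_negf)
    have f1: "f {i} = C * p - p" if "i \<in> objs n" for i
    proof -
      have "(\<Sum>j\<in>objs n. y ({i} \<union> {j})) = (\<Sum>j\<in>objs n. if j = i then p else 0)"
        by (rule sum.cong) (auto simp: y_def that doubleton_eq_iff)
      then show ?thesis using that fin ysing by (simp add: f_def shift_vec_def sum_negf)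
    qed
    show "moment_psd (Pow W) (shift_vec (objs n) C (\<lambda>j. - 1) y)"
      unfolding f_def[symmetric]
    proof (rule psd_lemma[OF finW])
      show "0 \<le> f {i}" if "i \<in> W" for i
      proof -
        have "0 \<le> (C - 1) * p" using p0 C1 by simp
        then show ?thesis using W that f1[of i] by (auto simp: algebra_simps)
      qed
      have "(\<Sum>i\<in>W. f {i}) = (\<Sum>i\<in>W. C * p - p)" using W f1 by (intro sum.cong) auto
      also have "\<dots> = real (card W) * (C * p - p)" by simp
      also have "\<dots> \<le> f {}" unfolding f0 p_def s_def C_def
        using arithB[of \<delta> e "real (card W)" "real n"] e0 assms W n0 by simp
      finally show "(\<Sum>i\<in>W. f {i}) \<le> f {}" .
      fix K assume K: "K \<subseteq> W" "K \<noteq> {}" "\<forall>i. K \<noteq> {i}"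
      have "y (K \<union> {j}) = 0" for j
      proof (rule yzero)
        show "K \<union> {j} \<noteq> {}" by simp
        show "\<forall>i. K \<union> {j} \<noteq> {i}"
        proof (intro allI notI)
          fix i assume "K \<union> {j} = {i}"
          then have "K \<subseteq> {i}" by blast
          then have "K = {i}" using K(2) by (auto simp: subset_singleton_iff)
          then show False using K(3) by blast
        qed
      qed
      then show "f K = 0" using yzero[OF K(2,3)] by (simp add: f_def shift_vec_def)
    qed
  qed
  have "(\<Sum>i\<in>objs n. 1 * y {i}) = s" using ysing cardn n0 by (simp add: p_def)
  moreover have "(2 - \<epsilon>) / (1 + \<delta>) * knap_OPT n (\<lambda>_. 1) (\<lambda>_. 1) C \<le> s"
    using opt_one[OF C1] assms e0 by (simp add: s_def divide_right_mono)
  ultimately show ?thesis using C1 ySA by (auto simp: Let_def)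
qed
end
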